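(* Let $\mathcal V$ be a finite-dimensional vector space over $\mathbb K\in\{\mathbb R,\mathbb C\}$ with norm $\|\cdot\|$, dual space $\mathcal V^\star$, dual norm $\|\cdot\|_\star$, and $\mathrm d_\star(x,y)=\frac12\|x-y\|_\star$. Let $\epsilon,\tau>0$, $z\in\mathcal V^\star$ and $\mu$ a probability measure over $\mathcal V^\star$. Then for every $x\in\mathcal V^\star$, $$\Pr_{y\sim\mu}[\mathrm d_\star(x,y)<\epsilon]\le\max\left\{\mathrm{frac}(\mu,z,\tau),\ \Pr_{y\sim\mu}\left[\mathrm d_\star(y,z)<2\epsilon+\tfrac\tau2\right]\right\},$$ where $\mathrm{frac}(\mu,z,\tau)=\sup_{v\in\overline B_1(0)}\Pr_{y\sim\mu}[|y(v)-z(v)|>\tau]$.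
   Context: $\overline B_1(0)=\{v\in\mathcal V:\|v\|\le1\}$ and $\|x\|_\star=\sup_{\|v\|\le1}|x(v)|$; elements of $\mathcal V^\star$ are evaluated on vectors $v\in\mathcal V$ as linear functionals. *)

theory Defs
  imports "HOL-Analysis.Analysis" "HOL-Probability.Probability"
begin

text \<open>An n-dimensional vector space over K (K = real or complex) is represented in
coordinates as K^n; an arbitrary norm on it is a function N satisfying the norm axioms.\<close>

definition is_norm :: "('k::real_normed_field ^ 'n \<Rightarrow> real) \<Rightarrow> bool" where
  "is_norm N \<longleftrightarrow> (\<forall>v. N v = 0 \<longleftrightarrow> v = 0)
     \<and> (\<forall>c v. N (\<chi> i. c * v $ i) = norm c * N v)
     \<and> (\<forall>u v. N (u + v) \<le> N u + N v)"

text \<open>Elements of the dual space (K-linear functionals on K^n) are represented by their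
coefficient vectors; evaluation of the functional y on the vector v:\<close>

definition dual_eval :: "'k::real_normed_field ^ 'n \<Rightarrow> 'k ^ 'n \<Rightarrow> 'k" where
  "dual_eval y v = (\<Sum>i\<in>UNIV. y $ i * v $ i)"

definition dual_norm :: "('k::real_normed_field ^ 'n \<Rightarrow> real) \<Rightarrow> 'k ^ 'n \<Rightarrow> real" where
  "dual_norm N x = (SUP v\<in>{v. N v \<le> 1}. norm (dual_eval x v))"

definition dstar :: "('k::real_normed_field ^ 'n \<Rightarrow> real) \<Rightarrow> 'k ^ 'n \<Rightarrow> 'k ^ 'n \<Rightarrow> real" where
  "dstar N x y = dual_norm N (x - y) / 2"

definition frac :: "('k::real_normed_field ^ 'n \<Rightarrow> real) \<Rightarrow> ('k ^ 'n) measure \<Rightarrow> 'k ^ 'n \<Rightarrow> real \<Rightarrow> real" where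
  "frac N \<mu> z \<tau> = (SUP v\<in>{v. N v \<le> 1}.
      measure \<mu> {y \<in> space \<mu>. norm (dual_eval y v - dual_eval z v) > \<tau>})"

end

theory Submission
  imports Defs
begin

context
  fixes N :: "'k::{real_normed_field,euclidean_space} ^ 'n \<Rightarrow> real"
  assumes nN: "is_norm N"
begin

lemma N0: "N 0 = 0" using nN unfolding is_norm_def by auto
lemma Nz: "N v = 0 \<longleftrightarrow> v = 0" using nN unfolding is_norm_def by auto
lemma Ntri: "N (u + v) \<le> N u + N v" using nN unfolding is_norm_def by auto
lemma Nscale: "N (r *\<^sub>R v) = \<bar>r\<bar> * N v"
proof -
  have "\<And>i. (r *\<^sub>R v) $ i = (of_real r :: 'k) * v $ i"
    by (simp only: vector_scaleR_component) (rule scaleR_conv_of_real)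
  then have "(\<chi> i. (of_real r :: 'k) * v $ i) = r *\<^sub>R v"
    by (simp add: vec_eq_iff)
  then show ?thesis using nN unfolding is_norm_def
    by (metis norm_of_real)
qed
lemma Nneg: "N (- v) = N v"
  using Nscale[of "-1" v] by simp
lemma Nnonneg: "N v \<ge> 0"
proof -
  have "N (v + - v) \<le> N v + N (- v)" by (rule Ntri)
  then show ?thesis using N0 Nneg by simp
qed
lemma Ndiff: "\<bar>N u - N v\<bar> \<le> N (u - v)"
  using Ntri[of "u - v" v] Ntri[of "v - u" u] Nneg[of "u - v"] by (simp add: abs_le_iff)
lemma Nsum: "finite B \<Longrightarrow> N (\<Sum>b\<in>B. f b) \<le> (\<Sum>b\<in>B. N (f b))"
  by (induction B rule: finite_induct) (auto simp: N0 intro: order_trans[OF Ntri])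

definition CN :: real where "CN = (\<Sum>b\<in>Basis. N b)"

lemma Nupper: "N v \<le> CN * norm v"
proof -
  have "N v = N (\<Sum>b\<in>Basis. (v \<bullet> b) *\<^sub>R b)" by (simp add: euclidean_representation)
  also have "\<dots> \<le> (\<Sum>b\<in>Basis. N ((v \<bullet> b) *\<^sub>R b))" by (rule Nsum) simp
  also have "\<dots> = (\<Sum>b\<in>Basis. \<bar>v \<bullet> b\<bar> * N b)" by (simp add: Nscale)
  also have "\<dots> \<le> (\<Sum>b\<in>Basis. norm v * N b)"
    by (intro sum_mono mult_right_mono Basis_le_norm Nnonneg)
  finally show ?thesis by (simp add: CN_def sum_distrib_left mult.commute)
qed

lemma CN_nonneg: "CN \<ge> 0" unfolding CN_def by (simp add: sum_nonneg Nnonneg)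

lemma Ncont: "continuous_on S N"
proof -
  have "CN-lipschitz_on S N"
  proof (rule lipschitz_onI)
    fix x y show "dist (N x) (N y) \<le> CN * dist x y"
      using Ndiff[of x y] Nupper[of "x - y"] by (simp add: dist_real_def dist_norm)
  qed (rule CN_nonneg)
  then show ?thesis by (rule lipschitz_on_continuous_on)
qed

lemma Nlower: "\<exists>m>0. \<forall>v. m * norm v \<le> N v"
proof -
  have cs: "compact (sphere (0::'k^'n) 1)" by (rule compact_sphere)
  have ne: "sphere (0::'k^'n) 1 \<noteq> {}"
  proof -
    obtain b :: "'k^'n" where "b \<in> Basis" using nonempty_Basis by blast
    then have "b \<in> sphere 0 1" by (simp add: norm_Basis)
    then show ?thesis by blast
  qed
  obtain u where u: "u \<in> sphere 0 1" "\<And>w. w \<in> sphere 0 1 \<Longrightarrow> N u \<le> N w"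
    using continuous_attains_inf[OF cs ne Ncont] by blast
  have "u \<noteq> 0" using u by auto
  then have pos: "N u > 0" using Nz[of u] Nnonneg[of u] by auto
  have "N u * norm v \<le> N v" for v
  proof (cases "v = 0")
    case True then show ?thesis by (simp add: N0)
  next
    case False
    then have "N u \<le> N ((1 / norm v) *\<^sub>R v)" by (intro u(2)) simp
    also have "\<dots> = N v / norm v" by (simp add: Nscale)
    finally show ?thesis using False by (simp add: field_simps)
  qed
  then show ?thesis using pos by blast
qed


lemma UB_bdd: "\<exists>R\<ge>0. \<forall>v. N v \<le> 1 \<longrightarrow> norm v \<le> R"
proof -
  obtain m where m: "m > 0" "\<And>v. m * norm v \<le> N v" using Nlower by blast
  have "norm v \<le> 1 / m" if "N v \<le> 1" for v
    using m(2)[of v] that m(1) by (simp add: field_simps)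
  then show ?thesis using m(1) by (intro exI[of _ "1/m"]) auto
qed

lemma UB_compact: "compact {v. N v \<le> 1}"
proof -
  obtain R where R: "\<And>v. N v \<le> 1 \<Longrightarrow> norm v \<le> R" using UB_bdd by blast
  have "closed {v. N v \<le> 1}"
    by (rule closed_Collect_le[OF Ncont continuous_on_const])
  moreover have "bounded {v. N v \<le> 1}"
    unfolding bounded_iff using R by blast
  ultimately show ?thesis using compact_eq_bounded_closed by blast
qed

lemma de_cont: "continuous_on S (\<lambda>v. dual_eval w v)"
  unfolding dual_eval_def by (intro continuous_intros)

lemma de_cont2: "continuous_on S (\<lambda>y. dual_eval y v)"
  unfolding dual_eval_def by (intro continuous_intros)

lemma de_diff: "dual_eval (a - b) v = dual_eval a v - dual_eval b v"
  unfolding dual_eval_def by (simp add: sum_subtractf left_diff_distrib)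
lemma de_add: "dual_eval (a + b) v = dual_eval a v + dual_eval b v"
  unfolding dual_eval_def by (simp add: sum.distrib distrib_right)
lemma de_minus: "dual_eval (- a) v = - dual_eval a v"
  unfolding dual_eval_def by (simp add: sum_negf)

lemma de_bound: fixes w v :: "'k ^ 'n" shows "norm (dual_eval w v) \<le> real CARD('n) * (norm w * norm v)"
proof -
  have "norm (dual_eval w v) \<le> (\<Sum>i\<in>UNIV. norm (w $ i * v $ i))"
    unfolding dual_eval_def by (rule norm_sum)
  also have "\<dots> \<le> (\<Sum>i\<in>(UNIV::'n set). norm w * norm v)"
  proof (rule sum_mono)
    fix i show "norm (w $ i * v $ i) \<le> norm w * norm v"
      unfolding norm_mult by (intro mult_mono Finite_Cartesian_Product.norm_nth_le) auto
  qed
  finally show ?thesis by simp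
qed

lemma dn_max: "\<exists>v0. N v0 \<le> 1 \<and> dual_norm N w = norm (dual_eval w v0)
   \<and> (\<forall>v. N v \<le> 1 \<longrightarrow> norm (dual_eval w v) \<le> dual_norm N w)"
proof -
  have "0 \<in> {v. N v \<le> 1}" by (simp add: N0)
  then have ne: "{v. N v \<le> 1} \<noteq> {}" by blast
  have "continuous_on {v. N v \<le> 1} (\<lambda>v. norm (dual_eval w v))"
    by (intro continuous_intros de_cont)
  then obtain v0 where v0: "N v0 \<le> 1" "\<And>v. N v \<le> 1 \<Longrightarrow> norm (dual_eval w v) \<le> norm (dual_eval w v0)"
    using continuous_attains_sup[OF UB_compact ne] by auto
  have "dual_norm N w = norm (dual_eval w v0)"
    unfolding dual_norm_def using v0 by (intro cSup_eq_maximum) auto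
  then show ?thesis using v0 by auto
qed

lemma dn_le: "N v \<le> 1 \<Longrightarrow> norm (dual_eval w v) \<le> dual_norm N w"
  using dn_max by blast

lemma dn_tri: "dual_norm N (a + b) \<le> dual_norm N a + dual_norm N b"
proof -
  obtain v0 where v0: "N v0 \<le> 1" "dual_norm N (a + b) = norm (dual_eval (a + b) v0)"
    using dn_max by blast
  have "norm (dual_eval (a + b) v0) \<le> norm (dual_eval a v0) + norm (dual_eval b v0)"
    by (simp add: de_add norm_triangle_ineq)
  also have "\<dots> \<le> dual_norm N a + dual_norm N b"
    using v0(1) by (intro add_mono dn_le)
  finally show ?thesis using v0 by simp
qed

lemma dn_minus: "dual_norm N (- a) = dual_norm N a"
  unfolding dual_norm_def by (simp add: de_minus)

lemma dn_upper: "\<exists>K\<ge>0. \<forall>w. dual_norm N w \<le> K * norm w"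
proof -
  obtain R where R: "R \<ge> 0" "\<And>v. N v \<le> 1 \<Longrightarrow> norm v \<le> R" using UB_bdd by blast
  have "dual_norm N w \<le> (real CARD('n) * R) * norm w" for w
  proof -
    obtain v0 where v0: "N v0 \<le> 1" "dual_norm N w = norm (dual_eval w v0)"
      using dn_max by blast
    have "norm (dual_eval w v0) \<le> real CARD('n) * (norm w * norm v0)" by (rule de_bound)
    also have "\<dots> \<le> real CARD('n) * (norm w * R)"
      using R(2)[OF v0(1)] by (intro mult_left_mono) auto
    finally show ?thesis using v0 by (simp add: algebra_simps)
  qed
  then show ?thesis using R(1) by (intro exI[of _ "real CARD('n) * R"]) auto
qed

lemma dn_cont: "continuous_on S (\<lambda>y. dual_norm N (y - z))"
proof -
  obtain K where K: "K \<ge> 0" "\<And>w. dual_norm N w \<le> K * norm w" using dn_upper by blast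
  have "K-lipschitz_on S (\<lambda>y. dual_norm N (y - z))"
  proof (rule lipschitz_onI)
    fix a b
    have 1: "dual_norm N (a - z) \<le> dual_norm N (a - b) + dual_norm N (b - z)"
      using dn_tri[of "a - b" "b - z"] by simp
    have 2: "dual_norm N (b - z) \<le> dual_norm N (b - a) + dual_norm N (a - z)"
      using dn_tri[of "b - a" "a - z"] by simp
    have 3: "dual_norm N (b - a) = dual_norm N (a - b)"
      using dn_minus[of "a - b"] by simp
    show "dist (dual_norm N (a - z)) (dual_norm N (b - z)) \<le> K * dist a b"
      using 1 2 3 K(2)[of "a - b"] by (simp add: dist_real_def dist_norm abs_le_iff)
  qed (rule K(1))
  then show ?thesis by (rule lipschitz_on_continuous_on)
qed

lemma main:
  fixes \<mu> :: "('k ^ 'n) measure"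
  assumes P: "prob_space \<mu>" and S: "sets \<mu> = sets borel" and e: "\<epsilon> > 0" and t: "\<tau> > 0"
  shows "measure \<mu> {y \<in> space \<mu>. dstar N x y < \<epsilon>}
              \<le> max (frac N \<mu> z \<tau>)
                     (measure \<mu> {y \<in> space \<mu>. dstar N y z < 2 * \<epsilon> + \<tau> / 2})"
proof -
  interpret prob_space \<mu> by (rule P)
  have sp: "space \<mu> = UNIV" using sets_eq_imp_space_eq[OF S] by simp
  let ?B = "{y \<in> space \<mu>. dstar N x y < \<epsilon>}"
  show ?thesis
  proof (cases "dual_norm N (x - z) < 2 * \<epsilon> + \<tau>")
    case True
    let ?S = "{y \<in> space \<mu>. dstar N y z < 2 * \<epsilon> + \<tau> / 2}"
    have "open {y. dual_norm N (y - z) / 2 < 2 * \<epsilon> + \<tau> / 2}"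
      by (intro open_Collect_less continuous_intros dn_cont) auto
    then have Sm: "?S \<in> sets \<mu>" unfolding S sp dstar_def by simp
    have "?B \<subseteq> ?S"
    proof
      fix y assume "y \<in> ?B"
      then have y: "dual_norm N (x - y) < 2 * \<epsilon>" by (simp add: dstar_def)
      have "dual_norm N (y - z) \<le> dual_norm N (y - x) + dual_norm N (x - z)"
        using dn_tri[of "y - x" "x - z"] by simp
      moreover have "dual_norm N (y - x) = dual_norm N (x - y)"
        using dn_minus[of "x - y"] by simp
      ultimately show "y \<in> ?S" using y True sp by (simp add: dstar_def)
    qed
    then have "measure \<mu> ?B \<le> measure \<mu> ?S"
      by (intro finite_measure_mono Sm)
    then show ?thesis by linarith
  next
    case False
    obtain v0 where v0: "N v0 \<le> 1" "dual_norm N (x - z) = norm (dual_eval (x - z) v0)"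
      using dn_max by blast
    let ?A = "{y \<in> space \<mu>. norm (dual_eval y v0 - dual_eval z v0) > \<tau>}"
    have "open {y. \<tau> < norm (dual_eval y v0 - dual_eval z v0)}"
      by (intro open_Collect_less continuous_intros de_cont2)
    then have Am: "?A \<in> sets \<mu>" unfolding S sp by simp
    have "?B \<subseteq> ?A"
    proof
      fix y assume "y \<in> ?B"
      then have y: "dual_norm N (x - y) < 2 * \<epsilon>" by (simp add: dstar_def)
      have "norm (dual_eval (x - y) v0) \<le> dual_norm N (x - y)" using v0(1) by (rule dn_le)
      moreover have "dual_eval y v0 - dual_eval z v0 = dual_eval (x - z) v0 - dual_eval (x - y) v0"
        by (simp add: de_diff)
      moreover have "norm (dual_eval (x - z) v0) - norm (dual_eval (x - y) v0)
          \<le> norm (dual_eval (x - z) v0 - dual_eval (x - y) v0)"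
        by (rule norm_triangle_ineq2)
      ultimately show "y \<in> ?A" using y False v0(2) sp by simp
    qed
    then have "measure \<mu> ?B \<le> measure \<mu> ?A"
      by (intro finite_measure_mono Am)
    also have "\<dots> \<le> frac N \<mu> z \<tau>"
      unfolding frac_def
    proof (rule cSUP_upper)
      show "v0 \<in> {v. N v \<le> 1}" using v0 by simp
      show "bdd_above ((\<lambda>v. measure \<mu> {y \<in> space \<mu>. \<tau> < norm (dual_eval y v - dual_eval z v)}) ` {v. N v \<le> 1})"
        using prob_space.prob_le_1[OF P] by (intro bdd_aboveI2) 
    qed
    finally show ?thesis by linarith
  qed
qed

end

theorem mainTheorem7:
  shows "(\<forall>(N :: real ^ 'n \<Rightarrow> real) (\<mu> :: (real ^ 'n) measure) \<epsilon> \<tau> z x.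
            is_norm N \<and> prob_space \<mu> \<and> sets \<mu> = sets borel \<and> \<epsilon> > 0 \<and> \<tau> > 0 \<longrightarrow>
            measure \<mu> {y \<in> space \<mu>. dstar N x y < \<epsilon>}
              \<le> max (frac N \<mu> z \<tau>)
                     (measure \<mu> {y \<in> space \<mu>. dstar N y z < 2 * \<epsilon> + \<tau> / 2}))
       \<and> (\<forall>(N :: complex ^ 'm \<Rightarrow> real) (\<mu> :: (complex ^ 'm) measure) \<epsilon> \<tau> z x.
            is_norm N \<and> prob_space \<mu> \<and> sets \<mu> = sets borel \<and> \<epsilon> > 0 \<and> \<tau> > 0 \<longrightarrow>
            measure \<mu> {y \<in> space \<mu>. dstar N x y < \<epsilon>}
              \<le> max (frac N \<mu> z \<tau>)
                     (measure \<mu> {y \<in> space \<mu>. dstar N y z < 2 * \<epsilon> + \<tau> / 2}))"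
proof (intro conjI allI impI)
  fix N :: "real ^ 'n \<Rightarrow> real" and \<mu> :: "(real ^ 'n) measure" and \<epsilon> \<tau> :: real and z x :: "real ^ 'n"
  assume "is_norm N \<and> prob_space \<mu> \<and> sets \<mu> = sets borel \<and> \<epsilon> > 0 \<and> \<tau> > 0"
  then show "measure \<mu> {y \<in> space \<mu>. dstar N x y < \<epsilon>}
              \<le> max (frac N \<mu> z \<tau>)
                     (measure \<mu> {y \<in> space \<mu>. dstar N y z < 2 * \<epsilon> + \<tau> / 2})"
    using main by blast
next
  fix N :: "complex ^ 'm \<Rightarrow> real" and \<mu> :: "(complex ^ 'm) measure" and \<epsilon> \<tau> :: real and z x :: "complex ^ 'm"
  assume "is_norm N \<and> prob_space \<mu> \<and> sets \<mu> = sets borel \<and> \<epsilon> > 0 \<and> \<tau> > 0"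
  then show "measure \<mu> {y \<in> space \<mu>. dstar N x y < \<epsilon>}
              \<le> max (frac N \<mu> z \<tau>)
                     (measure \<mu> {y \<in> space \<mu>. dstar N y z < 2 * \<epsilon> + \<tau> / 2})"
    using main by blast
qed

end
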